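(* Let $W$ satisfy the mixing assumptions in the context, and consider the iterates $\mathbf{x}^{(k)}=[x_1^{(k)};\dots;x_m^{(k)}]\in\mathbb{R}^{mn}$ of Algorithm DDS-F (described in the context), where all poll directions are unit vectors and the stepsizes satisfy $\alpha_i^{(k)}\le\alpha^{(k)}_{\max}$ for all $i,k$, for a positive sequence $\{\alpha^{(k)}_{\max}\}$. Let $\zeta:=\max(|\lambda_2(W)|,|\lambda_m(W)|)$, let $C_W\ge0$ be a constant with $\|\widehat W^j-A_m\|\le C_W\zeta^j$ for all $j\in\mathbb{N}$, and let $C_\zeta\ge0$ be a constant with $\sum_{j=0}^k\zeta^{k-j}\alpha^{(j)}_{\max}\le C_\zeta\alpha^{(k)}_{\max}$ for all $k\in\mathbb{N}$. Then for every $k\ge1$, $$\left\|\mathbf{x}^{(k)}-A_m\mathbf{x}^{(k)}\right\|\le\sqrt{m}\,C_W\left(\|\mathbf{x}^{(0)}\|\zeta^k+C_\zeta\alpha^{(k-1)}_{\max}\right).$$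
   Context: Setting: $m$ agents on an undirected connected graph $\mathcal{G}=(\{1,\dots,m\},\mathcal{E})$; $\mathcal{N}_i=\{j\neq i:(i,j)\in\mathcal{E}\}$. Mixing assumptions on $W=[w_{ij}]\in\mathbb{R}^{m\times m}$ with eigenvalues $\lambda_1(W)\ge\dots\ge\lambda_m(W)$: $W$ symmetric with nonnegative entries, $w_{ij}>0$ iff $i=j$ or $j\in\mathcal{N}_i$; $\lambda_1(W)=1$, $\lambda_2(W)<1$; $W\mathbf{1}=\mathbf{1}$; $-1<\lambda_m(W)\le0$. Notation: $\widehat W=W\otimes I_n$, $A_m=\frac1m(\mathbf{1}_m\mathbf{1}_m^\mathrm{T})\otimes I_n$. Algorithm DDS-F (local functions $f_i:\mathbb{R}^n\to\mathbb{R}$, forcing function $\rho:\mathbb{R}^+\to\mathbb{R}^+$, poll sets $D_i^{(k)}\subset\mathbb{R}^n$, stepsizes $\alpha_i^{(k)}>0$): start from $x_1^{(0)}=\dots=x_m^{(0)}$. At iteration $k$, each agent $i$ checks whether some $d\in D^{(k)}_i$ satisfies $f_i(x_i^{(k)}+\alpha_i^{(k)}d)\le f_i(x_i^{(k)})-\rho(\alpha_i^{(k)})$. If so, $x_i^{(k+1)}=\sum_{j\in\mathcal{N}_i\cup\{i\}}w_{ij}x_j^{(k)}+\alpha_i^{(k)}d$ (successful for $i$); otherwise $x_i^{(k+1)}=\sum_{j\in\mathcal{N}_i\cup\{i\}}w_{ij}x_j^{(k)}$ (unsuccessful for $i$). *)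

theory Defs
  imports "HOL-Analysis.Analysis"
begin

text \<open>Agents are indexed by a finite type 'm (so m = CARD('m)); local variables
live in real^'n.  A stacked vector [x_1;...;x_m] in R^{mn} is an element of
real^'n^'m, whose norm is exactly the Euclidean norm on R^{mn}.\<close>

text \<open>The action of W (Kronecker) I_n on a stacked vector.\<close>
definition Wkron :: "real^'m^'m \<Rightarrow> real^'n^'m \<Rightarrow> real^'n^'m" where
  "Wkron W X = (\<chi> i. \<Sum>j\<in>UNIV. (W $ i $ j) *\<^sub>R (X $ j))"

text \<open>The action of A_m = (1/m) 1 1^T (Kronecker) I_n on a stacked vector.\<close>
definition Am :: "real^'n^'m \<Rightarrow> real^'n^'m" where
  "Am X = (\<chi> i. inverse (real CARD('m)) *\<^sub>R (\<Sum>j\<in>UNIV. X $ j))"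

definition sorted_eigenvalues :: "real^'m^'m \<Rightarrow> (nat \<Rightarrow> real) \<Rightarrow> bool" where
  "sorted_eigenvalues W lam \<longleftrightarrow>
     (\<forall>t. det (W - t *\<^sub>R mat 1) = (\<Prod>i\<in>{1..CARD('m)}. (lam i - t))) \<and>
     (\<forall>i j. 1 \<le> i \<longrightarrow> i \<le> j \<longrightarrow> j \<le> CARD('m) \<longrightarrow> lam j \<le> lam i)"

end

theory Submission
  imports Defs
begin

lemma lin_Wkron: "linear (Wkron W)"
  by (rule linearI) (simp_all add: Wkron_def vec_eq_iff scaleR_add_right sum.distrib scaleR_right.sum mult_ac)

lemma lin_Am: "linear (Am :: real^'n^'m \<Rightarrow> real^'n^'m)"
  by (rule linearI) (simp_all add: Am_def vec_eq_iff scaleR_add_right sum.distrib scaleR_right.sum mult_ac)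

lemma lin_pow: "linear (Wkron W ^^ n)"
proof (induction n)
  case 0 then show ?case using linear_id by (simp add: id_def)
next
  case (Suc n) then show ?case using linear_compose[OF Suc lin_Wkron[of W]] by (simp add: o_def)
qed

lemma Am_Wkron:
  assumes "transpose W = W" "\<forall>i. (\<Sum>j\<in>UNIV. W $ i $ j) = 1"
  shows "Am (Wkron W X) = Am X"
proof -
  have sym: "W $ i $ j = W $ j $ i" for i j
    using assms(1) by (metis transpose_def vec_lambda_beta)
  have "(\<Sum>i\<in>UNIV. Wkron W X $ i) = (\<Sum>i\<in>UNIV. \<Sum>j\<in>UNIV. W $ i $ j *\<^sub>R X $ j)"
    by (simp add: Wkron_def)
  also have "\<dots> = (\<Sum>j\<in>UNIV. \<Sum>i\<in>UNIV. W $ i $ j *\<^sub>R X $ j)"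
    by (rule sum.swap)
  also have "\<dots> = (\<Sum>j\<in>UNIV. (\<Sum>i\<in>UNIV. W $ j $ i) *\<^sub>R X $ j)"
    by (simp add: scaleR_left.sum sym)
  also have "\<dots> = (\<Sum>j\<in>UNIV. X $ j)" using assms(2) by simp
  finally show ?thesis by (simp add: Am_def)
qed

lemma Am_pow:
  assumes "transpose W = W" "\<forall>i. (\<Sum>j\<in>UNIV. W $ i $ j) = 1"
  shows "Am ((Wkron W ^^ n) X) = Am X"
  by (induction n) (simp_all add: Am_Wkron[OF assms])

lemma norm_bound_cart:
  fixes X :: "real^'n^'m"
  assumes "\<forall>i. norm (X $ i) \<le> a"
  shows "norm X \<le> sqrt (real CARD('m)) * a"
proof -
  have a0: "a \<ge> 0" using assms norm_ge_zero order_trans by blast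
  have "(\<Sum>i\<in>UNIV. (norm (X $ i))\<^sup>2) \<le> (\<Sum>i\<in>(UNIV::'m set). a\<^sup>2)"
    by (rule sum_mono) (simp add: assms power_mono)
  also have "\<dots> = real CARD('m) * a\<^sup>2" by simp
  finally have "norm X \<le> sqrt (real CARD('m) * a\<^sup>2)"
    by (simp add: norm_vec_def L2_set_def)
  also have "\<dots> = sqrt (real CARD('m)) * a" using a0 by (simp add: real_sqrt_mult)
  finally show ?thesis .
qed

theorem proposition2:
  fixes E :: "'m::finite \<Rightarrow> 'm \<Rightarrow> bool"
    and W :: "real^'m^'m"
    and lam :: "nat \<Rightarrow> real"
    and f :: "'m \<Rightarrow> real^'n \<Rightarrow> real"
    and \<rho> :: "real \<Rightarrow> real"
    and D :: "nat \<Rightarrow> 'm \<Rightarrow> (real^'n) set"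
    and \<alpha> :: "nat \<Rightarrow> 'm \<Rightarrow> real"
    and \<alpha>max :: "nat \<Rightarrow> real"
    and x :: "nat \<Rightarrow> real^'n^'m"
    and \<zeta> C_W C_\<zeta> :: real
  assumes m2: "CARD('m) \<ge> 2"
    and E_sym: "\<forall>i j. E i j \<longleftrightarrow> E j i"
    and E_irrefl: "\<forall>i. \<not> E i i"
    and E_conn: "\<forall>i j. E\<^sup>*\<^sup>* i j"
    and W_sym: "transpose W = W"
    and W_nonneg: "\<forall>i j. W $ i $ j \<ge> 0"
    and W_pos: "\<forall>i j. W $ i $ j > 0 \<longleftrightarrow> (i = j \<or> (j \<noteq> i \<and> E i j))"
    and W_stoch: "\<forall>i. (\<Sum>j\<in>UNIV. W $ i $ j) = 1"
    and eig: "sorted_eigenvalues W lam"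
    and lam1: "lam 1 = 1"
    and lam2: "lam 2 < 1"
    and lamm: "-1 < lam (CARD('m))" "lam (CARD('m)) \<le> 0"
    and rho_pos: "\<forall>t>0. \<rho> t > 0"
    and unit_dirs: "\<forall>k i d. d \<in> D k i \<longrightarrow> norm d = 1"
    and alpha_pos: "\<forall>k i. \<alpha> k i > 0"
    and alphamax_pos: "\<forall>k. \<alpha>max k > 0"
    and alpha_le: "\<forall>k i. \<alpha> k i \<le> \<alpha>max k"
    and x0: "\<forall>i j. x 0 $ i = x 0 $ j"
    and step_succ: "\<forall>k i. (\<exists>d\<in>D k i. f i (x k $ i + \<alpha> k i *\<^sub>R d) \<le> f i (x k $ i) - \<rho> (\<alpha> k i)) \<longrightarrow>
        (\<exists>d\<in>D k i. f i (x k $ i + \<alpha> k i *\<^sub>R d) \<le> f i (x k $ i) - \<rho> (\<alpha> k i) \<and>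
           x (Suc k) $ i = (\<Sum>j\<in>{j. j \<noteq> i \<and> E i j} \<union> {i}. W $ i $ j *\<^sub>R x k $ j) + \<alpha> k i *\<^sub>R d)"
    and step_unsucc: "\<forall>k i. \<not> (\<exists>d\<in>D k i. f i (x k $ i + \<alpha> k i *\<^sub>R d) \<le> f i (x k $ i) - \<rho> (\<alpha> k i)) \<longrightarrow>
           x (Suc k) $ i = (\<Sum>j\<in>{j. j \<noteq> i \<and> E i j} \<union> {i}. W $ i $ j *\<^sub>R x k $ j)"
    and zeta_def: "\<zeta> = max \<bar>lam 2\<bar> \<bar>lam (CARD('m))\<bar>"
    and CW_nonneg: "C_W \<ge> 0"
    and CW: "\<forall>j::nat. onorm (\<lambda>X::real^'n^'m. (Wkron W ^^ j) X - Am X) \<le> C_W * \<zeta> ^ j"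
    and Czeta_nonneg: "C_\<zeta> \<ge> 0"
    and Czeta: "\<forall>k::nat. (\<Sum>j\<le>k. \<zeta> ^ (k - j) * \<alpha>max j) \<le> C_\<zeta> * \<alpha>max k"
  shows "\<forall>k\<ge>1. norm (x k - Am (x k))
           \<le> sqrt (real CARD('m)) * C_W * (norm (x 0) * \<zeta> ^ k + C_\<zeta> * \<alpha>max (k - 1))"
proof -
  define T :: "real^'n^'m \<Rightarrow> real^'n^'m" where "T = Wkron W"
  define e where "e j = x (Suc j) - T (x j)" for j
  have linT: "linear T" unfolding T_def by (rule lin_Wkron)
  have zeta0: "\<zeta> \<ge> 0" using zeta_def by simp
  have msq: "sqrt (real CARD('m)) \<ge> 1" using m2 by simp
  have rowsum: "(\<Sum>j\<in>{j. j \<noteq> i \<and> E i j} \<union> {i}. W $ i $ j *\<^sub>R X $ j) = T X $ i" for i and X :: "real^'n^'m"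
  proof -
    have "(\<Sum>j\<in>{j. j \<noteq> i \<and> E i j} \<union> {i}. W $ i $ j *\<^sub>R X $ j) = (\<Sum>j\<in>UNIV. W $ i $ j *\<^sub>R X $ j)"
    proof (rule sum.mono_neutral_left)
      show "\<forall>j\<in>UNIV - ({j. j \<noteq> i \<and> E i j} \<union> {i}). W $ i $ j *\<^sub>R X $ j = 0"
      proof
        fix j assume "j \<in> UNIV - ({j. j \<noteq> i \<and> E i j} \<union> {i})"
        then have "\<not> W $ i $ j > 0" using W_pos by auto
        then have "W $ i $ j = 0" using W_nonneg by (metis less_eq_real_def)
        then show "W $ i $ j *\<^sub>R X $ j = 0" by simp
      qed
    qed auto
    then show ?thesis by (simp add: T_def Wkron_def)
  qed
  have ebound: "norm (e k) \<le> sqrt (real CARD('m)) * \<alpha>max k" for k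
  proof (rule norm_bound_cart, rule allI)
    fix i
    show "norm (e k $ i) \<le> \<alpha>max k"
    proof (cases "\<exists>d\<in>D k i. f i (x k $ i + \<alpha> k i *\<^sub>R d) \<le> f i (x k $ i) - \<rho> (\<alpha> k i)")
      case True
      then obtain d where d: "d \<in> D k i"
        "x (Suc k) $ i = (\<Sum>j\<in>{j. j \<noteq> i \<and> E i j} \<union> {i}. W $ i $ j *\<^sub>R x k $ j) + \<alpha> k i *\<^sub>R d"
        using step_succ by blast
      have "e k $ i = \<alpha> k i *\<^sub>R d" unfolding e_def vector_minus_component d(2) rowsum by simp
      then have "norm (e k $ i) = \<alpha> k i" using unit_dirs d(1) alpha_pos
        by (simp add: less_imp_le)
      then show ?thesis using alpha_le by simp
    next
      case False
      then have "x (Suc k) $ i = (\<Sum>j\<in>{j. j \<noteq> i \<and> E i j} \<union> {i}. W $ i $ j *\<^sub>R x k $ j)" using step_unsucc by blast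
      then have "e k $ i = 0" unfolding e_def vector_minus_component rowsum by simp
      then show ?thesis using alphamax_pos by (simp add: less_imp_le)
    qed
  qed
  have decomp: "x k = (T ^^ k) (x 0) + (\<Sum>j<k. (T ^^ (k - Suc j)) (e j))" for k
  proof (induction k)
    case 0 then show ?case by simp
  next
    case (Suc k)
    have "x (Suc k) = T (x k) + e k" by (simp add: e_def)
    also have "T (x k) = (T ^^ Suc k) (x 0) + (\<Sum>j<k. (T ^^ (Suc k - Suc j)) (e j))"
    proof -
      have "T (x k) = T ((T ^^ k) (x 0)) + (\<Sum>j<k. T ((T ^^ (k - Suc j)) (e j)))"
        by (subst Suc, simp add: linear_add[OF linT] linear_sum[OF linT])
      also have "(\<Sum>j<k. T ((T ^^ (k - Suc j)) (e j))) = (\<Sum>j<k. (T ^^ (Suc k - Suc j)) (e j))"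
        proof (rule sum.cong)
        fix j assume "j \<in> {..<k}"
        then have "Suc k - Suc j = Suc (k - Suc j)" by auto
        then show "T ((T ^^ (k - Suc j)) (e j)) = (T ^^ (Suc k - Suc j)) (e j)" by simp
      qed simp
      finally show ?thesis by simp
    qed
    finally show ?case by simp
  qed
  define P where "P n X = (T ^^ n) X - Am X" for n X
  have Pb: "norm (P n X) \<le> C_W * \<zeta> ^ n * norm X" for n X
  proof -
    have bl: "bounded_linear (\<lambda>X::real^'n^'m. (Wkron W ^^ n) X - Am X)"
      using linear_compose_sub[OF lin_pow lin_Am] linear_conv_bounded_linear by blast
    have "norm (P n X) \<le> onorm (\<lambda>X::real^'n^'m. (Wkron W ^^ n) X - Am X) * norm X"
      unfolding P_def T_def by (rule onorm[OF bl])
    also have "\<dots> \<le> C_W * \<zeta> ^ n * norm X"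
      using CW by (intro mult_right_mono) auto
    finally show ?thesis .
  qed
  have linAm: "linear (Am :: real^'n^'m \<Rightarrow> real^'n^'m)" by (rule lin_Am)
  have AmT: "Am ((T ^^ n) X) = Am X" for n X
    unfolding T_def by (rule Am_pow[OF W_sym W_stoch])
  show ?thesis
  proof (intro allI impI)
    fix k :: nat assume "k \<ge> 1"
    then obtain k' where k: "k = Suc k'" by (cases k) auto
    have "x k - Am (x k) = P k (x 0) + (\<Sum>j<k. P (k - Suc j) (e j))"
    proof -
      have dk: "x k = (T ^^ k) (x 0) + (\<Sum>j<k. (T ^^ (k - Suc j)) (e j))" by (rule decomp)
      have "Am (x k) = Am (x 0) + (\<Sum>j<k. Am (e j))"
        unfolding dk linear_add[OF linAm] linear_sum[OF linAm] AmT ..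
      then show ?thesis unfolding P_def sum_subtractf using dk by simp
    qed
    then have "norm (x k - Am (x k)) \<le> norm (P k (x 0)) + (\<Sum>j<k. norm (P (k - Suc j) (e j)))"
      using norm_triangle_ineq[of "P k (x 0)" "\<Sum>j<k. P (k - Suc j) (e j)"]
        norm_sum[of "\<lambda>j. P (k - Suc j) (e j)" "{..<k}"] by simp
    also have "\<dots> \<le> C_W * \<zeta> ^ k * norm (x 0) + (\<Sum>j<k. C_W * \<zeta> ^ (k - Suc j) * (sqrt (real CARD('m)) * \<alpha>max j))"
    proof (intro add_mono Pb sum_mono)
      fix j
      have "norm (P (k - Suc j) (e j)) \<le> C_W * \<zeta> ^ (k - Suc j) * norm (e j)" by (rule Pb)
      also have "\<dots> \<le> C_W * \<zeta> ^ (k - Suc j) * (sqrt (real CARD('m)) * \<alpha>max j)"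
        using ebound CW_nonneg zeta0 by (intro mult_left_mono) auto
      finally show "norm (P (k - Suc j) (e j)) \<le> C_W * \<zeta> ^ (k - Suc j) * (sqrt (real CARD('m)) * \<alpha>max j)" .
    qed
    also have "(\<Sum>j<k. C_W * \<zeta> ^ (k - Suc j) * (sqrt (real CARD('m)) * \<alpha>max j))
        = sqrt (real CARD('m)) * C_W * (\<Sum>j\<le>k'. \<zeta> ^ (k' - j) * \<alpha>max j)"
      by (simp add: k sum_distrib_left lessThan_Suc_atMost mult_ac)
    also have "\<dots> \<le> sqrt (real CARD('m)) * C_W * (C_\<zeta> * \<alpha>max k')"
      using Czeta CW_nonneg by (intro mult_left_mono) auto
    also have "C_W * \<zeta> ^ k * norm (x 0) \<le> sqrt (real CARD('m)) * C_W * (norm (x 0) * \<zeta> ^ k)"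
    proof -
      have "0 \<le> C_W * (norm (x 0) * \<zeta> ^ k)" using CW_nonneg zeta0 by simp
      then have "1 * (C_W * (norm (x 0) * \<zeta> ^ k)) \<le> sqrt (real CARD('m)) * (C_W * (norm (x 0) * \<zeta> ^ k))"
        using msq by (intro mult_right_mono) auto
      then show ?thesis by (simp add: mult_ac)
    qed
    finally show "norm (x k - Am (x k)) \<le> sqrt (real CARD('m)) * C_W * (norm (x 0) * \<zeta> ^ k + C_\<zeta> * \<alpha>max (k - 1))"
      by (simp add: k distrib_left)
  qed
qed

end
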